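(* Let $\varphi:\mathbb{R}^n\to\mathbb{R}$ be continuously differentiable around $\bar x$ with $\nabla\varphi(\bar x)=0$, where $\nabla\varphi$ is locally Lipschitzian around $\bar x$ with modulus $\ell>0$ and semismooth$^*$ at $\bar x$. Let $x^k\to\bar x$ with $x^k\neq\bar x$ for all $k$, and let $\{d^k\}$ satisfy $\|x^k+d^k-\bar x\|=o(\|x^k-\bar x\|)$. Consider: (i) $\nabla\varphi$ is directionally differentiable at $\bar x$ and there is $\kappa>0$ with $\langle\nabla\varphi(x^k),d^k\rangle\le-\frac1\kappa\|d^k\|^2$ for all sufficiently large $k$; (ii) there is $\kappa>0$ with $\varphi(x^k+d^k)-\varphi(x^k)\le\langle\nabla\varphi(x^k+d^k),d^k\rangle-\frac1{2\kappa}\|d^k\|^2$ for all sufficiently large $k$. Then $\varphi(x^k+d^k)\le\varphi(x^k)+\sigma\langle\nabla\varphi(x^k),d^k\rangle$ for all sufficiently large $k$, provided that either (i) holds and $\sigma\in(0,\tfrac12)$, or (ii) holds and $\sigma\in(0,1/(2\ell\kappa))$.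
   Context: Regular normal cone: $\widehat N_\Omega(\bar z):=\{v\mid \limsup_{z\to\bar z,\,z\in\Omega}\langle v,z-\bar z\rangle/\|z-\bar z\|\le 0\}$. Directional limiting normal cone: $N_\Omega(\bar z;d):=\{v\mid\exists t_k\downarrow0,\ d_k\to d,\ v_k\to v \text{ with } v_k\in\widehat N_\Omega(\bar z+t_kd_k)\}$. Directional coderivative of $F:\mathbb{R}^n\rightrightarrows\mathbb{R}^m$: $D^*F((\bar x,\bar y);(u,v))(v^* ):=\{u^*\mid(u^*,-v^* )\in N_{\operatorname{gph}F}((\bar x,\bar y);(u,v))\}$. $F$ is semismooth$^*$ at $(\bar x,\bar y)\in\operatorname{gph}F$ if for all $(u,v)\in\mathbb{R}^n\times\mathbb{R}^m$, $\langle u^*,u\rangle=\langle v^*,v\rangle$ whenever $u^*\in D^*F((\bar x,\bar y);(u,v))(v^* )$. "$\nabla\varphi$ semismooth$^*$ at $\bar x$" means at $(\bar x,\nabla\varphi(\bar x))$. *)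

theory Defs
  imports "HOL-Analysis.Analysis" "HOL-Library.Liminf_Limsup" "HOL-Library.Landau_Symbols"
begin

definition regular_normal_cone :: "'a::real_inner set \<Rightarrow> 'a \<Rightarrow> 'a set" where
  "regular_normal_cone \<Omega> zb =
     (if zb \<in> \<Omega> then
        {v. Limsup (at zb within \<Omega>) (\<lambda>z. ereal (inner v (z - zb) / norm (z - zb))) \<le> 0}
      else {})"

definition dir_normal_cone :: "'a::real_inner set \<Rightarrow> 'a \<Rightarrow> 'a \<Rightarrow> 'a set" where
  "dir_normal_cone \<Omega> zb d =
     {v. \<exists>(t::nat \<Rightarrow> real) dd vv. (\<forall>k. t k > 0) \<and> t \<longlonglongrightarrow> 0 \<and>
          dd \<longlonglongrightarrow> d \<and> vv \<longlonglongrightarrow> v \<and>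
          (\<forall>k. vv k \<in> regular_normal_cone \<Omega> (zb + t k *\<^sub>R dd k))}"

definition graph :: "('a \<Rightarrow> 'b set) \<Rightarrow> ('a \<times> 'b) set" where
  "graph F = {(x, y). y \<in> F x}"

definition dir_coderiv ::
  "('a::real_inner \<Rightarrow> 'b::real_inner set) \<Rightarrow> 'a \<times> 'b \<Rightarrow> 'a \<times> 'b \<Rightarrow> 'b \<Rightarrow> 'a set" where
  "dir_coderiv F zb uv vs = {us. (us, - vs) \<in> dir_normal_cone (graph F) zb uv}"

definition semismooth_star :: "('a::real_inner \<Rightarrow> 'b::real_inner set) \<Rightarrow> 'a \<Rightarrow> 'b \<Rightarrow> bool" where
  "semismooth_star F xb yb \<longleftrightarrow> (xb, yb) \<in> graph F \<and>
     (\<forall>u v vs us. us \<in> dir_coderiv F (xb, yb) (u, v) vs \<longrightarrow> inner us u = inner vs v)"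

definition semismooth_star_fun :: "('a::real_inner \<Rightarrow> 'b::real_inner) \<Rightarrow> 'a \<Rightarrow> bool" where
  "semismooth_star_fun g xb \<longleftrightarrow> semismooth_star (\<lambda>x. {g x}) xb (g xb)"

definition directionally_differentiable :: "('a::real_normed_vector \<Rightarrow> 'b::real_normed_vector) \<Rightarrow> 'a \<Rightarrow> bool" where
  "directionally_differentiable g xb \<longleftrightarrow>
     (\<forall>u. \<exists>w. ((\<lambda>t. (g (xb + t *\<^sub>R u) - g xb) /\<^sub>R t) \<longlongrightarrow> w) (at_right 0))"

end

theory Submission
  imports Defs
begin


lemma dir_unif:
  fixes g :: "'a::euclidean_space \<Rightarrow> 'a"
  assumes g0: "g xb = 0" and dd: "directionally_differentiable g xb" and ep: "\<epsilon> > 0"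
  shows "\<exists>\<delta>>0. \<forall>r s. 0 < r \<longrightarrow> r < \<delta> \<longrightarrow> 0 \<le> s \<longrightarrow> s \<le> 1 \<longrightarrow>
           norm (g (xb + (s*r) *\<^sub>R u) - s *\<^sub>R g (xb + r *\<^sub>R u)) \<le> \<epsilon>/2 * r"
proof -
  obtain w where w: "((\<lambda>t. (g (xb + t *\<^sub>R u) - g xb) /\<^sub>R t) \<longlongrightarrow> w) (at_right 0)"
    using dd unfolding directionally_differentiable_def by blast
  have "eventually (\<lambda>t. dist ((g (xb + t *\<^sub>R u) - g xb) /\<^sub>R t) w < \<epsilon>/4) (at_right (0::real))"
    using w ep unfolding tendsto_iff by (meson divide_pos_pos zero_less_numeral)
  then obtain b where b: "b > 0" and hb: "\<And>t. t > 0 \<Longrightarrow> t < b \<Longrightarrow> dist (g (xb + t *\<^sub>R u) /\<^sub>R t) w < \<epsilon>/4"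
    unfolding eventually_at_right_field using g0 by auto
  have key: "norm (g (xb + t *\<^sub>R u) - t *\<^sub>R w) \<le> \<epsilon>/4 * t" if "t > 0" "t < b" for t
  proof -
    have "g (xb + t *\<^sub>R u) - t *\<^sub>R w = t *\<^sub>R (g (xb + t *\<^sub>R u) /\<^sub>R t - w)"
      using that by (simp add: algebra_simps)
    then have "norm (g (xb + t *\<^sub>R u) - t *\<^sub>R w) = t * dist (g (xb + t *\<^sub>R u) /\<^sub>R t) w"
      using that by (simp add: dist_norm)
    also have "\<dots> \<le> t * (\<epsilon>/4)" using hb[OF that] that by simp
    finally show ?thesis by (simp add: mult.commute)
  qed
  show ?thesis
  proof (intro exI[of _ b] conjI allI impI b)
    fix r s :: real assume r: "0 < r" "r < b" and s: "0 \<le> s" "s \<le> 1"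
    show "norm (g (xb + (s*r) *\<^sub>R u) - s *\<^sub>R g (xb + r *\<^sub>R u)) \<le> \<epsilon>/2 * r"
    proof (cases "s = 0")
      case True then show ?thesis using g0 r ep by simp
    next
      case False
      then have sp: "s > 0" using s by simp
      have sr: "s*r > 0" "s*r < b" using sp r s
        apply simp using r s mult_left_le_one_le[of r s] by linarith
      have e1: "norm (g (xb + (s*r) *\<^sub>R u) - (s*r) *\<^sub>R w) \<le> \<epsilon>/4 * (s*r)" using key sr by blast
      have e2: "norm (s *\<^sub>R (g (xb + r *\<^sub>R u) - r *\<^sub>R w)) \<le> s * (\<epsilon>/4 * r)"
        using key[OF r] sp by simp
      have eq: "g (xb + (s*r) *\<^sub>R u) - s *\<^sub>R g (xb + r *\<^sub>R u) =
           (g (xb + (s*r) *\<^sub>R u) - (s*r) *\<^sub>R w) - s *\<^sub>R (g (xb + r *\<^sub>R u) - r *\<^sub>R w)"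
        by (simp add: algebra_simps)
      have "norm (g (xb + (s*r) *\<^sub>R u) - s *\<^sub>R g (xb + r *\<^sub>R u)) \<le> \<epsilon>/4 * (s*r) + s * (\<epsilon>/4 * r)"
        unfolding eq by (rule order_trans[OF norm_triangle_ineq4 add_mono[OF e1 e2]])
      also have "\<dots> = (\<epsilon>/2 * r) * s" by (simp add: algebra_simps)
      also have "\<dots> \<le> \<epsilon>/2 * r" using s r ep
        by (intro mult_left_le) auto
      finally show ?thesis .
    qed
  qed
qed

lemma unif:
  fixes g :: "'a::euclidean_space \<Rightarrow> 'a"
  assumes g0: "g xb = 0" and dd: "directionally_differentiable g xb" and ep: "\<epsilon> > 0"
    and lpos: "l > 0" and r0: "r0 > 0"
    and lip: "\<forall>y\<in>ball xb r0. \<forall>z\<in>ball xb r0. norm (g y - g z) \<le> l * dist y z"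
  shows "\<exists>\<delta>>0. \<forall>h s. norm h < \<delta> \<longrightarrow> 0 \<le> s \<longrightarrow> s \<le> 1 \<longrightarrow>
           norm (g (xb + s *\<^sub>R h) - s *\<^sub>R g (xb + h)) \<le> \<epsilon> * norm h"
proof -
  obtain du where du: "\<And>u. du u > 0" and
    hdu: "\<And>u r s. 0 < r \<Longrightarrow> r < du u \<Longrightarrow> 0 \<le> s \<Longrightarrow> s \<le> 1 \<Longrightarrow>
           norm (g (xb + (s*r) *\<^sub>R u) - s *\<^sub>R g (xb + r *\<^sub>R u)) \<le> \<epsilon>/2 * r"
    using dir_unif[OF g0 dd ep] by metis
  define \<rho> where "\<rho> = \<epsilon> / (8*l)"
  have rho: "\<rho> > 0" using ep lpos by (simp add: \<rho>_def)
  obtain K where K: "K \<subseteq> sphere (0::'a) 1" "finite K" and cov: "sphere (0::'a) 1 \<subseteq> (\<Union>c\<in>K. ball c \<rho>)"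
    using compactE_image[OF compact_sphere, of "sphere (0::'a) 1" "\<lambda>c. ball c \<rho>"] rho
    by (metis centre_in_ball open_ball UN_I subsetI)
  define \<delta> where "\<delta> = min r0 (if K = {} then 1 else Min (du ` K))"
  have dpos: "\<delta> > 0" using r0 du K(2) by (auto simp: \<delta>_def Min_gr_iff)
  show ?thesis
  proof (intro exI[of _ \<delta>] conjI dpos allI impI)
    fix h :: 'a and s :: real assume h: "norm h < \<delta>" and s: "0 \<le> s" "s \<le> 1"
    show "norm (g (xb + s *\<^sub>R h) - s *\<^sub>R g (xb + h)) \<le> \<epsilon> * norm h"
    proof (cases "h = 0")
      case True then show ?thesis using g0 by simp
    next
      case False
      define r where "r = norm h"
      define u where "u = h /\<^sub>R r"
      have rp: "r > 0" using False by (simp add: r_def)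
      have hu: "h = r *\<^sub>R u" using rp by (simp add: u_def)
      have "u \<in> sphere 0 1" using rp by (simp add: u_def r_def)
      then obtain c where c: "c \<in> K" "dist c u < \<rho>" using cov by auto
      have "K \<noteq> {}" using c by auto
      then have "Min (du ` K) \<le> du c" using K(2) c by simp
      then have rdu: "r < du c" "r < r0" using h by (auto simp: \<delta>_def r_def \<open>K \<noteq> {}\<close>)
      have c1: "norm c = 1" using c K by auto
      have A: "norm (g (xb + (s*r) *\<^sub>R c) - s *\<^sub>R g (xb + r *\<^sub>R c)) \<le> \<epsilon>/2 * r"
        using hdu[OF rp rdu(1) s] .
      have sr: "s * r \<le> r" using s rp by (simp add: mult_left_le_one_le)
      have sr0: "0 \<le> s * r" using s rp by simp
      have inb: "xb + t *\<^sub>R v \<in> ball xb r0" if "0 \<le> t" "t \<le> r" "norm v = 1" for t v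
        using that rdu(2) by (simp add: dist_norm)
      have B: "norm (g (xb + (s*r) *\<^sub>R u) - g (xb + (s*r) *\<^sub>R c)) \<le> l * r * \<rho>"
      proof -
        have "norm (g (xb + (s*r) *\<^sub>R u) - g (xb + (s*r) *\<^sub>R c)) \<le> l * dist (xb + (s*r) *\<^sub>R u) (xb + (s*r) *\<^sub>R c)"
          using lip inb[OF sr0 sr] c1 \<open>u \<in> sphere 0 1\<close> by (simp only: mem_sphere_0)
        also have "dist (xb + (s*r) *\<^sub>R u) (xb + (s*r) *\<^sub>R c) = (s*r) * dist c u"
          using sr0 by (simp add: dist_norm norm_minus_commute flip: scaleR_diff_right)
        also have "l * ((s*r) * dist c u) \<le> l * (r * \<rho>)"
          using lpos sr sr0 c(2) by (intro mult_left_mono mult_mono) auto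
        finally show ?thesis by simp
      qed
      have C: "norm (s *\<^sub>R g (xb + r *\<^sub>R u) - s *\<^sub>R g (xb + r *\<^sub>R c)) \<le> l * r * \<rho>"
      proof -
        have "norm (g (xb + r *\<^sub>R u) - g (xb + r *\<^sub>R c)) \<le> l * dist (xb + r *\<^sub>R u) (xb + r *\<^sub>R c)"
          using lip inb[of r] rp c1 \<open>u \<in> sphere 0 1\<close> by (simp only: mem_sphere_0 order_refl less_imp_le)
        also have "dist (xb + r *\<^sub>R u) (xb + r *\<^sub>R c) = r * dist c u"
          using rp by (simp add: dist_norm norm_minus_commute flip: scaleR_diff_right)
        also have "l * (r * dist c u) \<le> l * (r * \<rho>)"
          using lpos rp c(2) by (intro mult_left_mono) auto
        finally have "norm (g (xb + r *\<^sub>R u) - g (xb + r *\<^sub>R c)) \<le> l * r * \<rho>" by simp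
        then have "s * norm (g (xb + r *\<^sub>R u) - g (xb + r *\<^sub>R c)) \<le> 1 * (l * r * \<rho>)"
          using s by (intro mult_mono) auto
        then show ?thesis using s by (simp flip: scaleR_diff_right)
      qed
      have eq: "g (xb + s *\<^sub>R h) - s *\<^sub>R g (xb + h) =
        (g (xb + (s*r) *\<^sub>R c) - s *\<^sub>R g (xb + r *\<^sub>R c)) +
        (g (xb + (s*r) *\<^sub>R u) - g (xb + (s*r) *\<^sub>R c)) -
        (s *\<^sub>R g (xb + r *\<^sub>R u) - s *\<^sub>R g (xb + r *\<^sub>R c))"
        unfolding hu by (simp add: algebra_simps)
      have "norm (g (xb + s *\<^sub>R h) - s *\<^sub>R g (xb + h)) \<le> \<epsilon>/2 * r + l * r * \<rho> + l * r * \<rho>"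
        unfolding eq by (rule order_trans[OF norm_triangle_ineq4 add_mono[OF order_trans[OF norm_triangle_ineq add_mono[OF A B]] C]])
      also have "\<dots> = 3/4 * \<epsilon> * r" using lpos by (simp add: \<rho>_def field_simps)
      also have "\<dots> \<le> \<epsilon> * norm h" using ep rp by (simp add: r_def)
      finally show ?thesis .
    qed
  qed
qed



lemma seg_bound:
  fixes \<phi> :: "'a::euclidean_space \<Rightarrow> real" and g :: "'a \<Rightarrow> 'a"
  assumes der: "\<And>t. 0 \<le> t \<Longrightarrow> t \<le> 1 \<Longrightarrow> (\<phi> has_derivative (\<lambda>v. inner (g (x + t *\<^sub>R d)) v)) (at (x + t *\<^sub>R d))"
    and bd: "\<And>t. 0 \<le> t \<Longrightarrow> t \<le> 1 \<Longrightarrow> inner (g (x + t *\<^sub>R d) - (1 - t) *\<^sub>R g x) d \<le> B"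
  shows "\<phi> (x + d) - \<phi> x - inner (g x) d / 2 \<le> B"
proof -
  define G where "G = inner (g x) d"
  define F where "F = (\<lambda>t. \<phi> (x + t *\<^sub>R d) - (t - t^2/2) * G)"
  have D: "DERIV F t :> inner (g (x + t *\<^sub>R d)) d - (1 - t) * G" if "0 \<le> t" "t \<le> 1" for t
  proof -
    have l1: "((\<lambda>t. x + t *\<^sub>R d) has_derivative (\<lambda>s. s *\<^sub>R d)) (at t)"
      by (auto intro!: derivative_eq_intros)
    have "((\<phi> \<circ> (\<lambda>t. x + t *\<^sub>R d)) has_derivative ((\<lambda>v. inner (g (x + t *\<^sub>R d)) v) \<circ> (\<lambda>s. s *\<^sub>R d))) (at t)"
      by (rule diff_chain_at[OF l1 der[OF that]])
    then have "((\<lambda>t. \<phi> (x + t *\<^sub>R d)) has_derivative (\<lambda>s. inner (g (x + t *\<^sub>R d)) d * s)) (at t)"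
      by (simp add: o_def mult.commute)
    then have a: "((\<lambda>t. \<phi> (x + t *\<^sub>R d)) has_field_derivative inner (g (x + t *\<^sub>R d)) d) (at t)"
      unfolding has_field_derivative_def by simp
    have b: "((\<lambda>t. (t - t^2/2) * G) has_field_derivative (1 - t) * G) (at t)"
      by (auto intro!: derivative_eq_intros)
    show ?thesis unfolding F_def using DERIV_diff[OF a b] .
  qed
  obtain z where z: "0 < z" "z < 1" and eq: "F 1 - F 0 = (1 - 0) * (inner (g (x + z *\<^sub>R d)) d - (1 - z) * G)"
    using MVT2[of 0 1 F "\<lambda>t. inner (g (x + t *\<^sub>R d)) d - (1 - t) * G"] D by auto
  have "inner (g (x + z *\<^sub>R d)) d - (1 - z) * G = inner (g (x + z *\<^sub>R d) - (1 - z) *\<^sub>R g x) d"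
    by (simp add: G_def inner_diff_left)
  also have "\<dots> \<le> B" using bd z by simp
  finally have "F 1 - F 0 \<le> B" using eq by simp
  then show ?thesis by (simp add: F_def G_def)
qed



lemma case_i:
  fixes \<phi> :: "'a::euclidean_space \<Rightarrow> real" and g :: "'a \<Rightarrow> 'a"
    and xb :: 'a and x d :: "nat \<Rightarrow> 'a" and l \<sigma> \<kappa> r0 :: real
  assumes r0: "r0 > 0"
    and der: "\<forall>y\<in>ball xb r0. (\<phi> has_derivative (\<lambda>h. inner (g y) h)) (at y)"
    and lip: "\<forall>y\<in>ball xb r0. \<forall>z\<in>ball xb r0. norm (g y - g z) \<le> l * dist y z"
    and g0: "g xb = 0" and lpos: "l > 0" and dd: "directionally_differentiable g xb"
    and xlim: "x \<longlonglongrightarrow> xb"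
    and dsmall: "(\<lambda>k. norm (x k + d k - xb)) \<in> o(\<lambda>k. norm (x k - xb))"
    and kap: "\<kappa> > 0"
    and ev: "eventually (\<lambda>k. inner (g (x k)) (d k) \<le> - (1 / \<kappa>) * (norm (d k))\<^sup>2) sequentially"
    and sig: "0 < \<sigma>" "\<sigma> < 1/2"
  shows "eventually (\<lambda>k. \<phi> (x k + d k) \<le> \<phi> (x k) + \<sigma> * inner (g (x k)) (d k)) sequentially"
proof -
  define \<epsilon> where "\<epsilon> = (1/2 - \<sigma>) / (4*\<kappa>)"
  have ep: "\<epsilon> > 0" using sig kap by (simp add: \<epsilon>_def)
  obtain \<delta> where dp: "\<delta> > 0" and hd: "\<And>h s. norm h < \<delta> \<Longrightarrow> 0 \<le> s \<Longrightarrow> s \<le> 1 \<Longrightarrow>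
      norm (g (xb + s *\<^sub>R h) - s *\<^sub>R g (xb + h)) \<le> \<epsilon>/4 * norm h"
    using unif[OF g0 dd _ lpos r0 lip, of "\<epsilon>/4"] ep by auto
  define \<eta> where "\<eta> = min (1/2) (\<epsilon> / (4*l))"
  have eta: "\<eta> > 0" "\<eta> \<le> 1/2" "l * \<eta> \<le> \<epsilon>/4" using ep lpos
    by (auto simp: \<eta>_def min_def field_simps)
  have E1: "eventually (\<lambda>k. dist (x k) xb < min \<delta> (r0/2)) sequentially"
  proof -
    have "min \<delta> (r0/2) > 0" using dp r0 by simp
    then show ?thesis using xlim unfolding tendsto_iff by blast
  qed
  have E2: "eventually (\<lambda>k. norm (norm (x k + d k - xb)) \<le> \<eta> * norm (norm (x k - xb))) sequentially"
    using landau_o.smallD[OF dsmall eta(1)] .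
  show ?thesis
  proof (rule eventually_mono[OF eventually_conj[OF E1 eventually_conj[OF E2 ev]]])
    fix k assume A: "dist (x k) xb < min \<delta> (r0/2) \<and> norm (norm (x k + d k - xb)) \<le> \<eta> * norm (norm (x k - xb))
       \<and> inner (g (x k)) (d k) \<le> - (1 / \<kappa>) * (norm (d k))\<^sup>2"
    define h where "h = x k - xb"
    define e where "e = x k + d k - xb"
    define n where "n = norm h"
    have hn: "n < \<delta>" "n < r0/2" using A by (auto simp: n_def h_def dist_norm)
    have en: "norm e \<le> \<eta> * n" using A by (simp add: e_def n_def h_def)
    have n0: "n \<ge> 0" by (simp add: n_def)
    have de: "d k = e - h" by (simp add: e_def h_def)
    have xk: "x k = xb + h" by (simp add: h_def)
    have "\<eta> * n \<le> (1/2) * n" using eta n0 by (intro mult_right_mono) auto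
    then have eh: "norm e \<le> n/2" using en by simp
    have dup: "norm (d k) \<le> 2 * n" unfolding de
      using norm_triangle_ineq4[of e h] eh n0 norm_ge_zero[of e] unfolding n_def by linarith
    have dlo: "norm (d k) \<ge> n / 2" unfolding de
      using norm_triangle_ineq2[of h e] eh n0 norm_minus_commute[of e h] norm_ge_zero[of e]
      unfolding n_def by linarith
    have seg: "x k + t *\<^sub>R d k = xb + ((1 - t) *\<^sub>R h + t *\<^sub>R e)" for t
      by (simp add: de xk algebra_simps)
    have segn: "norm ((1 - t) *\<^sub>R h + t *\<^sub>R e) \<le> n" if "0 \<le> t" "t \<le> 1" for t
    proof -
      have "norm ((1 - t) *\<^sub>R h + t *\<^sub>R e) \<le> (1 - t) * n + t * (\<eta> * n)"
        using norm_triangle_ineq[of "(1 - t) *\<^sub>R h" "t *\<^sub>R e"] that mult_left_mono[OF en, of t]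
        by (simp add: n_def)
      also have "\<dots> \<le> (1 - t) * n + t * n"
        using that eta n0 by (intro add_left_mono mult_left_mono) (auto simp: mult_left_le_one_le)
      finally show ?thesis by (simp add: algebra_simps)
    qed
    have inball: "xb + v \<in> ball xb r0" if "norm v \<le> n" for v
      using that hn n0 by (simp add: dist_norm)
    have dern: "(\<phi> has_derivative (\<lambda>v. inner (g (x k + t *\<^sub>R d k)) v)) (at (x k + t *\<^sub>R d k))"
      if "0 \<le> t" "t \<le> 1" for t
      using der inball[OF segn[OF that]] unfolding seg by blast
    have bd: "inner (g (x k + t *\<^sub>R d k) - (1 - t) *\<^sub>R g (x k)) (d k) \<le> \<epsilon> * n^2"
      if t: "0 \<le> t" "t \<le> 1" for t
    proof -
      have b1: "norm (g (xb + ((1 - t) *\<^sub>R h + t *\<^sub>R e)) - g (xb + (1 - t) *\<^sub>R h)) \<le> \<epsilon>/4 * n"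
      proof -
        have m1: "xb + ((1 - t) *\<^sub>R h + t *\<^sub>R e) \<in> ball xb r0" by (rule inball[OF segn[OF t]])
        have "norm ((1 - t) *\<^sub>R h) \<le> n" using t by (simp add: n_def mult_left_le_one_le)
        then have m2: "xb + (1 - t) *\<^sub>R h \<in> ball xb r0" by (rule inball)
        have "norm (g (xb + ((1 - t) *\<^sub>R h + t *\<^sub>R e)) - g (xb + (1 - t) *\<^sub>R h))
            \<le> l * dist (xb + ((1 - t) *\<^sub>R h + t *\<^sub>R e)) (xb + (1 - t) *\<^sub>R h)"
          using lip m1 m2 by blast
        also have "\<dots> = l * (t * norm e)" using t by (simp add: dist_norm)
        also have "\<dots> \<le> l * (\<eta> * n)"
          using t en lpos eta n0 by (intro mult_left_mono) (auto intro: order_trans[OF mult_left_le_one_le])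
        also have "\<dots> = (l * \<eta>) * n" by simp
        also have "\<dots> \<le> \<epsilon>/4 * n" using eta n0 by (intro mult_right_mono) auto
        finally show ?thesis .
      qed
      have b2: "norm (g (xb + (1 - t) *\<^sub>R h) - (1 - t) *\<^sub>R g (xb + h)) \<le> \<epsilon>/4 * n"
        using hd[of h "1 - t"] hn t by (simp add: n_def)
      have "g (x k + t *\<^sub>R d k) - (1 - t) *\<^sub>R g (x k) =
          (g (xb + ((1 - t) *\<^sub>R h + t *\<^sub>R e)) - g (xb + (1 - t) *\<^sub>R h)) +
          (g (xb + (1 - t) *\<^sub>R h) - (1 - t) *\<^sub>R g (xb + h))"
        unfolding seg by (simp add: xk)
      then have nb: "norm (g (x k + t *\<^sub>R d k) - (1 - t) *\<^sub>R g (x k)) \<le> \<epsilon>/2 * n"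
        using order_trans[OF norm_triangle_ineq add_mono[OF b1 b2]] by simp
      have "inner (g (x k + t *\<^sub>R d k) - (1 - t) *\<^sub>R g (x k)) (d k)
          \<le> norm (g (x k + t *\<^sub>R d k) - (1 - t) *\<^sub>R g (x k)) * norm (d k)"
        by (rule order_trans[OF _ Cauchy_Schwarz_ineq2]) simp
      also have "\<dots> \<le> (\<epsilon>/2 * n) * (2 * n)"
        using nb dup ep n0 by (intro mult_mono) auto
      also have "\<dots> = \<epsilon> * n^2" by (simp add: power2_eq_square)
      finally show ?thesis .
    qed
    have main: "\<phi> (x k + d k) - \<phi> (x k) - inner (g (x k)) (d k) / 2 \<le> \<epsilon> * n^2"
      using seg_bound[of \<phi> g "x k" "d k" "\<epsilon> * n^2"] dern bd by simp
    have G: "inner (g (x k)) (d k) \<le> - (1/\<kappa>) * (n/2)^2"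
    proof -
      have "(n/2)^2 \<le> (norm (d k))^2" using dlo n0 by (intro power_mono) auto
      then have "(1/\<kappa>) * (n/2)^2 \<le> (1/\<kappa>) * (norm (d k))^2" using kap by (intro mult_left_mono) auto
      then show ?thesis using A by linarith
    qed
    have "(1/2 - \<sigma>) * inner (g (x k)) (d k) \<le> (1/2 - \<sigma>) * (- (1/\<kappa>) * (n/2)^2)"
      using G sig by (intro mult_left_mono) auto
    also have "\<dots> = - \<epsilon> * n^2" using kap by (simp add: \<epsilon>_def field_simps power2_eq_square)
    finally have "(1/2 - \<sigma>) * inner (g (x k)) (d k) \<le> - \<epsilon> * n^2" .
    then show "\<phi> (x k + d k) \<le> \<phi> (x k) + \<sigma> * inner (g (x k)) (d k)"
      using main by (simp add: algebra_simps)
  qed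
qed



lemma case_ii:
  fixes \<phi> :: "'a::euclidean_space \<Rightarrow> real" and g :: "'a \<Rightarrow> 'a"
    and xb :: 'a and x d :: "nat \<Rightarrow> 'a" and l \<sigma> \<kappa> r0 :: real
  assumes r0: "r0 > 0"
    and lip: "\<forall>y\<in>ball xb r0. \<forall>z\<in>ball xb r0. norm (g y - g z) \<le> l * dist y z"
    and g0: "g xb = 0" and lpos: "l > 0"
    and xlim: "x \<longlonglongrightarrow> xb"
    and dsmall: "(\<lambda>k. norm (x k + d k - xb)) \<in> o(\<lambda>k. norm (x k - xb))"
    and kap: "\<kappa> > 0"
    and ev: "eventually (\<lambda>k. \<phi> (x k + d k) - \<phi> (x k)
                     \<le> inner (g (x k + d k)) (d k) - (1 / (2 * \<kappa>)) * (norm (d k))\<^sup>2) sequentially"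
    and sig: "0 < \<sigma>" "\<sigma> < 1 / (2 * l * \<kappa>)"
  shows "eventually (\<lambda>k. \<phi> (x k + d k) \<le> \<phi> (x k) + \<sigma> * inner (g (x k)) (d k)) sequentially"
proof -
  define \<gamma> where "\<gamma> = 1/(2*\<kappa>) - \<sigma> * l"
  have "\<sigma> * (2 * l * \<kappa>) < 1" using sig lpos kap by (simp add: field_simps)
  then have gam: "\<gamma> > 0" using kap by (simp add: \<gamma>_def field_simps)
  define c where "c = 2*l + 1/\<kappa> + \<sigma>*l"
  have "1/\<kappa> > 0" "\<sigma>*l > 0" using lpos kap sig by auto
  then have cpos: "c > 0" using lpos unfolding c_def by linarith
  define \<eta> where "\<eta> = min (1/2) (\<gamma> / c)"
  have eta: "\<eta> > 0" "\<eta> \<le> 1/2" "\<eta> * c \<le> \<gamma>" using gam cpos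
    by (auto simp: \<eta>_def min_def field_simps)
  have E1: "eventually (\<lambda>k. dist (x k) xb < r0) sequentially"
    using xlim r0 unfolding tendsto_iff by blast
  have E2: "eventually (\<lambda>k. norm (norm (x k + d k - xb)) \<le> \<eta> * norm (norm (x k - xb))) sequentially"
    using landau_o.smallD[OF dsmall eta(1)] .
  show ?thesis
  proof (rule eventually_mono[OF eventually_conj[OF E1 eventually_conj[OF E2 ev]]])
    fix k assume A: "dist (x k) xb < r0 \<and> norm (norm (x k + d k - xb)) \<le> \<eta> * norm (norm (x k - xb))
       \<and> \<phi> (x k + d k) - \<phi> (x k) \<le> inner (g (x k + d k)) (d k) - (1 / (2 * \<kappa>)) * (norm (d k))\<^sup>2"
    define h where "h = x k - xb"
    define e where "e = x k + d k - xb"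
    define n where "n = norm h"
    have hn: "n < r0" using A by (auto simp: n_def h_def dist_norm)
    have en: "norm e \<le> \<eta> * n" using A by (simp add: e_def n_def h_def)
    have n0: "n \<ge> 0" by (simp add: n_def)
    have de: "d k = e - h" by (simp add: e_def h_def)
    have xk: "x k = xb + h" by (simp add: h_def)
    have xd: "x k + d k = xb + e" by (simp add: e_def)
    have "\<eta> * n \<le> (1/2) * n" using eta n0 by (intro mult_right_mono) auto
    then have eh: "norm e \<le> n/2" using en by simp
    have dup: "norm (d k) \<le> (1 + \<eta>) * n" unfolding de
      using norm_triangle_ineq4[of e h] en n0 unfolding n_def by (simp add: algebra_simps)
    have dlo: "norm (d k) \<ge> (1 - \<eta>) * n" unfolding de
      using norm_triangle_ineq2[of h e] en n0 norm_minus_commute[of e h]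
      unfolding n_def by (simp add: algebra_simps)
    have dlo0: "(1 - \<eta>) * n \<ge> 0" using eta n0 by simp
    have inb1: "x k \<in> ball xb r0" using hn by (simp add: xk n_def dist_norm)
    have inb2: "x k + d k \<in> ball xb r0" using hn eh n0 by (simp add: xd dist_norm)
    have xbin: "xb \<in> ball xb r0" using r0 by simp
    have g1: "norm (g (x k + d k)) \<le> l * (\<eta> * n)"
    proof -
      have "norm (g (x k + d k) - g xb) \<le> l * dist (x k + d k) xb" using lip inb2 xbin by blast
      also have "\<dots> = l * norm e" by (simp add: xd dist_norm)
      also have "\<dots> \<le> l * (\<eta> * n)" using en lpos by (intro mult_left_mono) auto
      finally show ?thesis using g0 by simp
    qed
    have g2: "norm (g (x k)) \<le> l * n"
    proof -
      have "norm (g (x k) - g xb) \<le> l * dist (x k) xb" using lip inb1 xbin by blast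
      then show ?thesis using g0 by (simp add: xk n_def dist_norm)
    qed
    define N where "N = n^2"
    have N0: "N \<ge> 0" by (simp add: N_def)
    have a1: "inner (g (x k + d k)) (d k) \<le> 2 * l * \<eta> * N"
    proof -
      have "inner (g (x k + d k)) (d k) \<le> norm (g (x k + d k)) * norm (d k)" by (rule Cauchy_Schwarz_ineq2[THEN abs_le_D1])
      also have "\<dots> \<le> (l * (\<eta> * n)) * ((1 + \<eta>) * n)"
        using g1 dup lpos eta n0 by (intro mult_mono) auto
      also have "\<dots> = (l * \<eta> * N) * (1 + \<eta>)" by (simp add: N_def power2_eq_square algebra_simps)
      also have "\<dots> \<le> (l * \<eta> * N) * 2" using eta lpos N0 by (intro mult_left_mono) auto
      finally show ?thesis by simp
    qed
    have a2: "(norm (d k))^2 \<ge> (1 - 2*\<eta>) * N"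
    proof -
      have "((1 - \<eta>) * n)^2 \<le> (norm (d k))^2" using dlo dlo0 by (intro power_mono) auto
      moreover have "((1 - \<eta>) * n)^2 = (1 - 2*\<eta>) * N + \<eta>^2 * N"
        by (simp add: N_def power2_eq_square algebra_simps)
      moreover have "\<eta>^2 * N \<ge> 0" using N0 by simp
      ultimately show ?thesis by linarith
    qed
    have a3: "inner (g (x k)) (d k) \<ge> - (l * (1 + \<eta>) * N)"
    proof -
      have "- inner (g (x k)) (d k) \<le> norm (g (x k)) * norm (d k)"
        using Cauchy_Schwarz_ineq2[of "g (x k)" "d k"] by linarith
      also have "\<dots> \<le> (l * n) * ((1 + \<eta>) * n)"
        using g2 dup lpos n0 by (intro mult_mono) auto
      also have "\<dots> = l * (1 + \<eta>) * N" by (simp add: N_def power2_eq_square algebra_simps)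
      finally show ?thesis by linarith
    qed
    have a3': "\<sigma> * inner (g (x k)) (d k) \<ge> \<sigma> * (- (l * (1 + \<eta>) * N))"
      using a3 sig by (intro mult_left_mono) auto
    have a2': "(1 / (2 * \<kappa>)) * (norm (d k))\<^sup>2 \<ge> (1 / (2 * \<kappa>)) * ((1 - 2*\<eta>) * N)"
      using a2 kap by (intro mult_left_mono) auto
    have alg: "2 * l * \<eta> * N - (1 / (2 * \<kappa>)) * ((1 - 2*\<eta>) * N) - \<sigma> * (- (l * (1 + \<eta>) * N))
        = (\<eta> * c - \<gamma>) * N"
      using kap by (simp add: c_def \<gamma>_def field_simps)
    have "(\<eta> * c - \<gamma>) * N \<le> 0" using eta N0 by (intro mult_nonpos_nonneg) auto
    then show "\<phi> (x k + d k) \<le> \<phi> (x k) + \<sigma> * inner (g (x k)) (d k)"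
      using A a1 a2' a3' alg by linarith
  qed
qed

theorem proposition4p4:
  fixes \<phi> :: "'a::euclidean_space \<Rightarrow> real" and g :: "'a \<Rightarrow> 'a"
    and xb :: 'a and x d :: "nat \<Rightarrow> 'a" and l \<sigma> :: real
  assumes C1: "\<exists>r>0. (\<forall>y\<in>ball xb r. (\<phi> has_derivative (\<lambda>h. inner (g y) h)) (at y))
                     \<and> continuous_on (ball xb r) g"
    and crit: "g xb = 0"
    and lpos: "l > 0"
    and lip: "\<exists>r>0. \<forall>y\<in>ball xb r. \<forall>z\<in>ball xb r. norm (g y - g z) \<le> l * dist y z"
    and ss: "semismooth_star_fun g xb"
    and xlim: "x \<longlonglongrightarrow> xb"
    and xne: "\<forall>k. x k \<noteq> xb"
    and dsmall: "(\<lambda>k. norm (x k + d k - xb)) \<in> o(\<lambda>k. norm (x k - xb))"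
    and cases:
      "(directionally_differentiable g xb \<and>
          (\<exists>\<kappa>>0. eventually (\<lambda>k. inner (g (x k)) (d k) \<le> - (1 / \<kappa>) * (norm (d k))\<^sup>2) sequentially)
          \<and> 0 < \<sigma> \<and> \<sigma> < 1 / 2)
       \<or> (\<exists>\<kappa>>0. eventually (\<lambda>k. \<phi> (x k + d k) - \<phi> (x k)
                     \<le> inner (g (x k + d k)) (d k) - (1 / (2 * \<kappa>)) * (norm (d k))\<^sup>2) sequentially
          \<and> 0 < \<sigma> \<and> \<sigma> < 1 / (2 * l * \<kappa>))"
  shows "eventually (\<lambda>k. \<phi> (x k + d k) \<le> \<phi> (x k) + \<sigma> * inner (g (x k)) (d k)) sequentially"
  proof -
  obtain r1 where r1: "r1 > 0" and der1: "\<forall>y\<in>ball xb r1. (\<phi> has_derivative (\<lambda>h. inner (g y) h)) (at y)"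
    using C1 by blast
  obtain r2 where r2: "r2 > 0" and lip2: "\<forall>y\<in>ball xb r2. \<forall>z\<in>ball xb r2. norm (g y - g z) \<le> l * dist y z"
    using lip by blast
  define r0 where "r0 = min r1 r2"
  have r0: "r0 > 0" using r1 r2 by (simp add: r0_def)
  have der: "\<forall>y\<in>ball xb r0. (\<phi> has_derivative (\<lambda>h. inner (g y) h)) (at y)"
    using der1 by (simp add: r0_def)
  have lip0: "\<forall>y\<in>ball xb r0. \<forall>z\<in>ball xb r0. norm (g y - g z) \<le> l * dist y z"
    using lip2 by (simp add: r0_def)
  from cases show ?thesis
  proof
    assume H: "directionally_differentiable g xb \<and>
          (\<exists>\<kappa>>0. eventually (\<lambda>k. inner (g (x k)) (d k) \<le> - (1 / \<kappa>) * (norm (d k))\<^sup>2) sequentially)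
          \<and> 0 < \<sigma> \<and> \<sigma> < 1 / 2"
    then obtain \<kappa> where "\<kappa> > 0" "eventually (\<lambda>k. inner (g (x k)) (d k) \<le> - (1 / \<kappa>) * (norm (d k))\<^sup>2) sequentially"
      by blast
    then show ?thesis using case_i[OF r0 der lip0 crit lpos _ xlim dsmall] H by blast
  next
    assume H: "\<exists>\<kappa>>0. eventually (\<lambda>k. \<phi> (x k + d k) - \<phi> (x k)
                     \<le> inner (g (x k + d k)) (d k) - (1 / (2 * \<kappa>)) * (norm (d k))\<^sup>2) sequentially
          \<and> 0 < \<sigma> \<and> \<sigma> < 1 / (2 * l * \<kappa>)"
    then show ?thesis using case_ii[OF r0 lip0 crit lpos xlim dsmall] by blast
  qed
qed

end
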